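(* Let $A\in\mathbb{R}^{n\times n}$ be symmetric and positive definite, and let $i_1,\dots,i_n$ be any ordering of the indices $\{1,\dots,n\}$. Define $A^{(1)}=A$ and, for $k=1,\dots,n$, let $a^{(k)}$ denote the $i_k$-th row of $A^{(k)}$ (as a column vector), set $$x_k=\frac{a^{(k)}}{\sqrt{A^{(k)}_{i_ki_k}}},\qquad A^{(k+1)}=A^{(k)}-x_kx_k^{T}.$$ Then every pivot $A^{(k)}_{i_ki_k}$ is positive, and the resulting vectors satisfy $$\sum_{k=1}^n x_kx_k^{*}=A\qquad\text{and}\qquad \sum_{k=1}^n\|x_k\|_1^2\leq n\cdot\operatorname{tr}(A).$$
   Context: $\|x\|_1=\sum_i|x_i|$ denotes the $\ell^1$-norm of a vector. *)

theory Defs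
  imports "HOL-Analysis.Analysis"
begin

definition pos_def_mat :: "real^'n^'n \<Rightarrow> bool" where
  "pos_def_mat A \<longleftrightarrow> (\<forall>x. x \<noteq> 0 \<longrightarrow> x \<bullet> (A *v x) > 0)"

definition outer :: "real^'n \<Rightarrow> real^'n^'n" where
  "outer x = (\<chi> i j. x $ i * x $ j)"

definition norm1 :: "real^'n \<Rightarrow> real" where
  "norm1 x = (\<Sum>i\<in>UNIV. \<bar>x $ i\<bar>)"

text \<open>Pivoted Cholesky iteration, 0-based: chol_A A p 0 = A^(1),
  chol_x A p k = x_(k+1) built from row p k of chol_A A p k.\<close>
fun chol_A :: "real^'n^'n \<Rightarrow> (nat \<Rightarrow> 'n) \<Rightarrow> nat \<Rightarrow> real^'n^'n" where
  "chol_A A p 0 = A"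
| "chol_A A p (Suc k) =
     chol_A A p k - outer ((1 / sqrt (chol_A A p k $ p k $ p k)) *\<^sub>R (chol_A A p k $ p k))"

definition chol_x :: "real^'n^'n \<Rightarrow> (nat \<Rightarrow> 'n) \<Rightarrow> nat \<Rightarrow> real^'n" where
  "chol_x A p k = (1 / sqrt (chol_A A p k $ p k $ p k)) *\<^sub>R (chol_A A p k $ p k)"

end

theory Submission
  imports Defs
begin

lemma h1: "(\<Sum>i\<in>UNIV. f i * axis j t $ i) = f j * (t::real)"
  by (simp add: axis_def if_distrib[where f="\<lambda>a. f _ * a"] cong: if_cong)
lemma h2: "(\<Sum>i\<in>UNIV. axis j t $ i * f i) = t * (f j::real)"
  by (simp add: axis_def if_distrib[where f="\<lambda>a. a * f _"] cong: if_cong)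

lemma outer_mult: "outer v *v x = (v \<bullet> x) *\<^sub>R v"
  by (simp add: vec_eq_iff outer_def matrix_vector_mult_def inner_vec_def
      sum_distrib_left algebra_simps)

lemma quad_outer: "x \<bullet> (outer v *v x) = (v \<bullet> x)\<^sup>2"
  by (simp add: outer_mult inner_commute power2_eq_square)

lemma sym_entry: "transpose B = B \<Longrightarrow> B $ i $ j = B $ j $ i"
  by (metis transpose_def vec_lambda_beta)

lemma quad_shift:
  fixes B :: "real^'n^'n"
  assumes "transpose B = B"
  shows "(x - axis j t) \<bullet> (B *v (x - axis j t))
    = x \<bullet> (B *v x) - 2 * t * (B $ j \<bullet> x) + t\<^sup>2 * B $ j $ j"
proof -
  have e1: "axis j t \<bullet> (B *v x) = t * (B $ j \<bullet> x)"
    by (simp add: inner_vec_def matrix_vector_mult_def h2)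
  have e2: "x \<bullet> (B *v axis j t) = t * (B $ j \<bullet> x)"
  proof -
    have "B *v axis j t = (\<chi> i. B $ i $ j * t)"
      by (simp add: vec_eq_iff matrix_vector_mult_def h1)
    then show ?thesis
      using sym_entry[OF assms, of _ j]
      by (simp add: inner_vec_def sum_distrib_left algebra_simps)
  qed
  have e3: "axis j t \<bullet> (B *v axis j t) = t\<^sup>2 * B $ j $ j"
    by (simp add: matrix_vector_mult_def inner_vec_def h1 h2 power2_eq_square)
  show ?thesis
    by (simp add: matrix_vector_mult_diff_distrib inner_diff_left inner_diff_right e1 e2 e3)
qed

definition inv_ok :: "real^'n^'n \<Rightarrow> 'n set \<Rightarrow> bool" where
  "inv_ok B S \<longleftrightarrow> transpose B = B \<and> (\<forall>x. 0 \<le> x \<bullet> (B *v x))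
     \<and> (\<forall>x. x \<noteq> 0 \<and> (\<forall>i. i \<notin> S \<longrightarrow> x $ i = 0) \<longrightarrow> 0 < x \<bullet> (B *v x))
     \<and> (\<forall>i. i \<notin> S \<longrightarrow> B $ i = 0)"

lemma step_pos:
  assumes "inv_ok B S" "j \<in> S"
  shows "B $ j $ j > 0"
proof -
  have "axis j (1::real) \<noteq> 0" by (simp add: axis_eq_0_iff)
  moreover have "\<forall>i. i \<notin> S \<longrightarrow> axis j (1::real) $ i = 0"
    using assms(2) by (auto simp: axis_def)
  ultimately have "0 < axis j 1 \<bullet> (B *v axis j 1)"
    using assms(1) unfolding inv_ok_def by blast
  thus ?thesis
    by (simp add: inner_vec_def matrix_vector_mult_def h1 h2)
qed

lemma step_inv:
  fixes B :: "real^'n^'n"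
  assumes ok: "inv_ok B S" and jS: "j \<in> S"
  shows "inv_ok (B - outer ((1 / sqrt (B $ j $ j)) *\<^sub>R B $ j)) (S - {j})"
proof -
  define d where "d = B $ j $ j"
  have d: "d > 0" using step_pos[OF ok jS] d_def by simp
  define b where "b = B $ j"
  have sym: "transpose B = B" and psd: "\<And>x. 0 \<le> x \<bullet> (B *v x)"
    and pd: "\<And>x. x \<noteq> 0 \<Longrightarrow> (\<forall>i. i \<notin> S \<longrightarrow> x $ i = 0) \<Longrightarrow> 0 < x \<bullet> (B *v x)"
    and zr: "\<And>i. i \<notin> S \<Longrightarrow> B $ i = 0"
    using ok unfolding inv_ok_def by blast+
  define B' where "B' = B - outer ((1 / sqrt d) *\<^sub>R b)"
  have sq: "(1 / sqrt d)\<^sup>2 = 1 / d" using d by (simp add: power_divide)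
  have Q: "x \<bullet> (B' *v x) = (x - axis j ((b \<bullet> x) / d)) \<bullet> (B *v (x - axis j ((b \<bullet> x) / d)))"
    for x
  proof -
    have "x \<bullet> (B' *v x) = x \<bullet> (B *v x) - (b \<bullet> x)\<^sup>2 / d"
      unfolding B'_def using d
      by (simp add: matrix_vector_mult_diff_rdistrib inner_diff_right quad_outer
          power_mult_distrib sq power_divide)
    also have "\<dots> = (x - axis j ((b \<bullet> x) / d)) \<bullet> (B *v (x - axis j ((b \<bullet> x) / d)))"
      using d unfolding quad_shift[OF sym] b_def d_def
      by (simp add: field_simps power2_eq_square)
    finally show ?thesis .
  qed
  have "transpose B' = B'"
    using sym_entry[OF sym]
    by (simp add: B'_def vec_eq_iff transpose_def outer_def)
  moreover have "\<forall>x. 0 \<le> x \<bullet> (B' *v x)" using Q psd by simp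
  moreover have "\<forall>x. x \<noteq> 0 \<and> (\<forall>i. i \<notin> S - {j} \<longrightarrow> x $ i = 0) \<longrightarrow> 0 < x \<bullet> (B' *v x)"
  proof (intro allI impI, elim conjE)
    fix x :: "real^'n"
    assume nz: "x \<noteq> 0" and sup: "\<forall>i. i \<notin> S - {j} \<longrightarrow> x $ i = 0"
    define y where "y = x - axis j ((b \<bullet> x) / d)"
    obtain i where xi: "x $ i \<noteq> 0" using nz by (auto simp: vec_eq_iff)
    then have "i \<noteq> j" using sup by auto
    then have "y $ i \<noteq> 0" using xi by (simp add: y_def axis_def)
    then have "y \<noteq> 0" by auto
    moreover have "\<forall>i. i \<notin> S \<longrightarrow> y $ i = 0"
      using sup jS by (auto simp: y_def axis_def)
    ultimately show "0 < x \<bullet> (B' *v x)" using pd Q y_def by simp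
  qed
  moreover have "\<forall>i. i \<notin> S - {j} \<longrightarrow> B' $ i = 0"
  proof (intro allI impI)
    fix i assume "i \<notin> S - {j}"
    then consider "i = j" | "i \<notin> S" by auto
    then show "B' $ i = 0"
    proof cases
      case 1
      have "B' $ j $ l = 0" for l
        using d sq by (simp add: B'_def outer_def b_def d_def[symmetric] power2_eq_square)
      then show ?thesis using 1 by (simp add: vec_eq_iff)
    next
      case 2
      have "B' $ i $ l = 0" for l
        using zr[OF 2] sym_entry[OF sym, of j i]
        by (simp add: B'_def outer_def b_def)
      then show ?thesis by (simp add: vec_eq_iff)
    qed
  qed
  ultimately show ?thesis unfolding inv_ok_def B'_def b_def d_def by blast
qed

theorem proposition2:
  fixes A :: "real^'n^'n" and p :: "nat \<Rightarrow> 'n"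
  assumes "transpose A = A"
    and "pos_def_mat A"
    and "bij_betw p {..<CARD('n)} (UNIV :: 'n set)"
  shows "(\<forall>k<CARD('n). chol_A A p k $ p k $ p k > 0)
    \<and> (\<Sum>k<CARD('n). outer (chol_x A p k)) = A
    \<and> (\<Sum>k<CARD('n). (norm1 (chol_x A p k))\<^sup>2) \<le> real CARD('n) * trace A"
proof -
  let ?n = "CARD('n)"
  have inj: "inj_on p {..<?n}" and img: "p ` {..<?n} = UNIV"
    using assms(3) by (auto simp: bij_betw_def)
  have I: "inv_ok (chol_A A p k) (UNIV - p ` {..<k})" if "k \<le> ?n" for k
    using that
  proof (induction k)
    case 0
    have "\<forall>x. 0 \<le> x \<bullet> (A *v x)"
      using assms(2) unfolding pos_def_mat_def
      by (metis inner_zero_left less_le order_refl)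
    then show ?case using assms(1,2) by (simp add: inv_ok_def pos_def_mat_def)
  next
    case (Suc k)
    have "p k \<notin> p ` {..<k}"
    proof
      assume "p k \<in> p ` {..<k}"
      then obtain x where "x < k" "p k = p x" by auto
      then show False using inj Suc.prems unfolding inj_on_def
        by (metis Suc_le_lessD lessThan_iff less_trans less_irrefl)
    qed
    then have "p k \<in> UNIV - p ` {..<k}" by simp
    from step_inv[OF Suc.IH[OF Suc_leD[OF Suc.prems]] this]
    have "inv_ok (chol_A A p (Suc k)) (UNIV - p ` {..<k} - {p k})" by simp
    moreover have "UNIV - p ` {..<k} - {p k} = UNIV - p ` {..<Suc k}"
      by (auto simp: lessThan_Suc)
    ultimately show ?case by simp
  qed
  have pos: "\<forall>k<?n. chol_A A p k $ p k $ p k > 0"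
  proof (intro allI impI)
    fix k assume k: "k < ?n"
    have "p k \<notin> p ` {..<k}"
    proof
      assume "p k \<in> p ` {..<k}"
      then obtain x where "x < k" "p k = p x" by auto
      then show False using inj k unfolding inj_on_def
        by (metis lessThan_iff less_trans less_irrefl)
    qed
    then show "chol_A A p k $ p k $ p k > 0"
      using step_pos[OF I] k by simp
  qed
  have tele: "(\<Sum>k<m. outer (chol_x A p k)) = A - chol_A A p m" for m
    by (induction m) (simp_all add: chol_x_def algebra_simps)
  have "chol_A A p ?n = 0"
    using I[of ?n] img by (simp add: inv_ok_def vec_eq_iff)
  then have sumA: "(\<Sum>k<?n. outer (chol_x A p k)) = A" using tele by simp
  have tr_outer: "trace (outer v) = (\<Sum>i\<in>UNIV. (v $ i)\<^sup>2)" for v :: "real^'n"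
    by (simp add: trace_def outer_def power2_eq_square)
  have trsum: "trace (\<Sum>k\<in>K. M k) = (\<Sum>k\<in>K. trace (M k))" for K and M :: "nat \<Rightarrow> real^'n^'n"
    by (induction K rule: infinite_finite_induct) (simp_all add: trace_add trace_def zero_vec_def sum.distrib)
  have n1: "(norm1 v)\<^sup>2 \<le> real ?n * trace (outer v)" for v :: "real^'n"
    using sum_squared_le_sum_of_squares[of "\<lambda>i. \<bar>v $ i\<bar>" UNIV]
    by (simp add: norm1_def tr_outer mult.commute)
  have "(\<Sum>k<?n. (norm1 (chol_x A p k))\<^sup>2) \<le> (\<Sum>k<?n. real ?n * trace (outer (chol_x A p k)))"
    by (rule sum_mono) (rule n1)
  also have "\<dots> = real ?n * trace A"
    by (simp add: sum_distrib_left[symmetric] trsum[symmetric] sumA)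
  finally show ?thesis using pos sumA by simp
qed

end
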